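(* Fix $p\in[2,\infty)$, assume (H1'), let $q=p/(p-1)$, and let $\beta:[0,1]\to[0,1]$ be smooth with $\beta=0$ outside $\omega$. Let $z$ be a strong solution with data $(z_0,z_1)\in Y_p$ and, for each $t\ge0$, let $v(t,\cdot)$ be the solution of $v_{xx}=\beta\,\operatorname{sgn}(z)|z|^{p-1}$ on $(0,1)$, $v(t,0)=v(t,1)=0$. Then there is a constant $K>0$ depending only on $p$ (and on $\beta$) such that for all $t\ge0$ and all $\sigma>0$, $\int_0^1|v|^q\,dx\le K E_p(t)$ and $\int_0^1|v_t|^q\,dx\le K\Big((p-2)\sigma E_p(t)+\sigma^{-(p-2)}\int_0^1\beta|z_t|^p\,dx\Big).$
   Context: (H1'): $a:[0,1]\to\mathbb{R}$ is continuous and nonnegative, and there exist $a_0>0$ and $c\in[0,1)$ such that $a\ge a_0$ on $\omega=[c,1]$. Damped wave equation: $z_{tt}-z_{xx}+a(x)z_t=0$ on $\mathbb{R}_+\times(0,1)$, $z(t,0)=z(t,1)=0$, $z(0)=z_0$, $z_t(0)=z_1$; $Y_p=(W^{2,p}(0,1)\cap W^{1,p}_0(0,1))\times W^{1,p}_0(0,1)$. $\rho=z_x+z_t$, $\xi=z_x-z_t$, $E_p(t)=\frac1p\int_0^1(|\rho|^p+|\xi|^p)\,dx$. *)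

theory Defs
  imports "HOL-Analysis.Analysis"
begin

text \<open>Functions on the space interval [0,1]. Integrals are Henstock-Kurzweil integrals over {0..1}.\<close>

definition in_Lp :: "real \<Rightarrow> (real \<Rightarrow> real) \<Rightarrow> bool" where
  "in_Lp p f \<longleftrightarrow> f measurable_on {0..1} \<and> (\<lambda>x. \<bar>f x\<bar> powr p) integrable_on {0..1}"

definition Lp_pow :: "real \<Rightarrow> (real \<Rightarrow> real) \<Rightarrow> real" where
  "Lp_pow p f = integral {0..1} (\<lambda>x. \<bar>f x\<bar> powr p)"

text \<open>f is in W^{1,p}(0,1) with (weak) derivative g: f in L^p, g in L^p and
  f is the (absolutely continuous) primitive of g.\<close>
definition has_weak_deriv_Lp :: "real \<Rightarrow> (real \<Rightarrow> real) \<Rightarrow> (real \<Rightarrow> real) \<Rightarrow> bool" where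
  "has_weak_deriv_Lp p f g \<longleftrightarrow> in_Lp p f \<and> in_Lp p g \<and>
     (\<forall>x\<in>{0..1}. f x = f 0 + integral {0..x} g)"

definition in_W2p_W10p :: "real \<Rightarrow> (real \<Rightarrow> real) \<Rightarrow> (real \<Rightarrow> real) \<Rightarrow> (real \<Rightarrow> real) \<Rightarrow> bool" where
  "in_W2p_W10p p f fx fxx \<longleftrightarrow> has_weak_deriv_Lp p f fx \<and> has_weak_deriv_Lp p fx fxx \<and> f 0 = 0 \<and> f 1 = 0"

definition in_W10p :: "real \<Rightarrow> (real \<Rightarrow> real) \<Rightarrow> (real \<Rightarrow> real) \<Rightarrow> bool" where
  "in_W10p p f fx \<longleftrightarrow> has_weak_deriv_Lp p f fx \<and> f 0 = 0 \<and> f 1 = 0"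

definition H1' :: "(real \<Rightarrow> real) \<Rightarrow> real \<Rightarrow> real \<Rightarrow> bool" where
  "H1' a a0 c \<longleftrightarrow> continuous_on {0..1} a \<and> (\<forall>x\<in>{0..1}. a x \<ge> 0) \<and>
     a0 > 0 \<and> 0 \<le> c \<and> c < 1 \<and> (\<forall>x\<in>{c..1}. a x \<ge> a0)"

text \<open>Strong solution of z_tt - z_xx + a z_t = 0, z(t,0)=z(t,1)=0, z(0)=z0, z_t(0)=z1,
  with data (z0,z1) in Y_p:
  z \<in> C([0,\<infinity>); W^{2,p} \<inter> W^{1,p}_0) \<inter> C^1([0,\<infinity>); W^{1,p}_0) \<inter> C^2([0,\<infinity>); L^p),
  the equation holding in L^p(0,1) for every t \<ge> 0.
  Here zx, zxx are the spatial derivatives of z, zt its time derivative, ztx the spatial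
  derivative of zt and ztt the time derivative of zt (all functions of (t,x)).\<close>
definition strong_solution ::
  "real \<Rightarrow> (real \<Rightarrow> real) \<Rightarrow> (real \<Rightarrow> real) \<Rightarrow> (real \<Rightarrow> real) \<Rightarrow>
   (real \<Rightarrow> real \<Rightarrow> real) \<Rightarrow> (real \<Rightarrow> real \<Rightarrow> real) \<Rightarrow> (real \<Rightarrow> real \<Rightarrow> real) \<Rightarrow>
   (real \<Rightarrow> real \<Rightarrow> real) \<Rightarrow> (real \<Rightarrow> real \<Rightarrow> real) \<Rightarrow> (real \<Rightarrow> real \<Rightarrow> real) \<Rightarrow> bool" where
  "strong_solution p a z0 z1 z zx zxx zt ztx ztt \<longleftrightarrow>
     (\<forall>t\<ge>0. in_W2p_W10p p (z t) (zx t) (zxx t) \<and> in_W10p p (zt t) (ztx t) \<and> in_Lp p (ztt t)) \<and>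
     (\<forall>t\<ge>0.
        \<comment> \<open>z is C^1 in time with values in W^{1,p}, derivative zt\<close>
        ((\<lambda>s. Lp_pow p (\<lambda>x. (z s x - z t x) / (s - t) - zt t x)) \<longlongrightarrow> 0) (at t within {0..}) \<and>
        ((\<lambda>s. Lp_pow p (\<lambda>x. (zx s x - zx t x) / (s - t) - ztx t x)) \<longlongrightarrow> 0) (at t within {0..}) \<and>
        \<comment> \<open>zt is differentiable in time with values in L^p, derivative ztt\<close>
        ((\<lambda>s. Lp_pow p (\<lambda>x. (zt s x - zt t x) / (s - t) - ztt t x)) \<longlongrightarrow> 0) (at t within {0..}) \<and>
        \<comment> \<open>continuity: z in W^{2,p}, zt in W^{1,p}, ztt in L^p\<close>
        ((\<lambda>s. Lp_pow p (\<lambda>x. zxx s x - zxx t x)) \<longlongrightarrow> 0) (at t within {0..}) \<and>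
        ((\<lambda>s. Lp_pow p (\<lambda>x. zt s x - zt t x)) \<longlongrightarrow> 0) (at t within {0..}) \<and>
        ((\<lambda>s. Lp_pow p (\<lambda>x. ztx s x - ztx t x)) \<longlongrightarrow> 0) (at t within {0..}) \<and>
        ((\<lambda>s. Lp_pow p (\<lambda>x. ztt s x - ztt t x)) \<longlongrightarrow> 0) (at t within {0..}) \<and>
        \<comment> \<open>the equation, in L^p(0,1)\<close>
        Lp_pow p (\<lambda>x. ztt t x - zxx t x + a x * zt t x) = 0) \<and>
     (\<forall>x\<in>{0..1}. z 0 x = z0 x \<and> zt 0 x = z1 x)"

definition in_Yp :: "real \<Rightarrow> (real \<Rightarrow> real) \<Rightarrow> (real \<Rightarrow> real) \<Rightarrow> bool" where
  "in_Yp p z0 z1 \<longleftrightarrow> (\<exists>d1 d2 e1. in_W2p_W10p p z0 d1 d2 \<and> in_W10p p z1 e1)"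

definition E_p :: "real \<Rightarrow> (real \<Rightarrow> real \<Rightarrow> real) \<Rightarrow> (real \<Rightarrow> real \<Rightarrow> real) \<Rightarrow> real \<Rightarrow> real" where
  "E_p p zx zt t = (1 / p) * integral {0..1}
     (\<lambda>x. \<bar>zx t x + zt t x\<bar> powr p + \<bar>zx t x - zt t x\<bar> powr p)"

definition smooth_on_01 :: "(real \<Rightarrow> real) \<Rightarrow> bool" where
  "smooth_on_01 f \<longleftrightarrow> (\<exists>D. D 0 = f \<and>
     (\<forall>n. \<forall>x\<in>{0..1}. (D n has_real_derivative D (Suc n) x) (at x within {0..1})))"

definition solves_dirichlet :: "(real \<Rightarrow> real) \<Rightarrow> (real \<Rightarrow> real) \<Rightarrow> bool" where
  "solves_dirichlet g w \<longleftrightarrow> continuous_on {0..1} w \<and> w 0 = 0 \<and> w 1 = 0 \<and>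
     (\<exists>w'. \<forall>x\<in>{0<..<1}. (w has_real_derivative w' x) (at x) \<and>
                           (w' has_real_derivative g x) (at x))"

end

theory Submission
  imports Defs
begin


lemma lebesgue_01: "{0..1::real} \<in> sets lebesgue" by simp

lemma inLp_meas: "in_Lp p f \<Longrightarrow> f \<in> borel_measurable (lebesgue_on {0..1})"
  unfolding in_Lp_def using measurable_on_iff_borel_measurable[of "{0..1::real}" f] by simp

lemma abs_le_powr: fixes x::real assumes "p \<ge> 1" shows "\<bar>x\<bar> \<le> 1 + \<bar>x\<bar> powr p"
proof (cases "\<bar>x\<bar> \<le> 1")
  case True then show ?thesis by (smt (verit) powr_ge_zero)
next
  case False
  then have "\<bar>x\<bar> powr 1 \<le> \<bar>x\<bar> powr p" using assms by (intro powr_mono) auto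
  then show ?thesis using False by simp
qed

lemma inLp_abs_int: assumes "in_Lp p f" "p \<ge> 1"
  shows "(\<lambda>x. \<bar>f x\<bar>) integrable_on {0..1}" "f integrable_on {0..1}"
proof -
  have g: "(\<lambda>x. 1 + \<bar>f x\<bar> powr p) integrable_on {0..1::real}"
    using assms unfolding in_Lp_def by (intro integrable_add) auto
  have m: "f \<in> borel_measurable (lebesgue_on {0..1})" using inLp_meas assms by blast
  show "f integrable_on {0..1}"
    by (rule measurable_bounded_by_integrable_imp_integrable_real[OF m g]) (use abs_le_powr assms in auto)
  show "(\<lambda>x. \<bar>f x\<bar>) integrable_on {0..1}"
    by (rule measurable_bounded_by_integrable_imp_integrable_real[OF _ g]) (use abs_le_powr assms m in auto)
qed

lemma young_pt: fixes a lam p :: real assumes "p > 1" "lam > 0" "a \<ge> 0"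
  shows "a \<le> lam * (a powr p / lam powr p / p + (p-1)/p)"
proof -
  have q: "1/p + 1/(p/(p-1)) = 1" using assms by (simp add: field_simps)
  have "(a/lam) * 1 \<le> (a/lam) powr p / p + 1 powr (p/(p-1)) / (p/(p-1))"
    by (rule Youngs_inequality) (use assms q in \<open>auto simp: field_simps\<close>)
  then have "a/lam \<le> a powr p / lam powr p / p + (p-1)/p"
    using assms by (simp add: powr_divide)
  then show ?thesis using assms by (simp add: field_simps)
qed

lemma Lp_pow_nonneg: "Lp_pow p f \<ge> 0"
  unfolding Lp_pow_def
  by (cases "(\<lambda>x. \<bar>f x\<bar> powr p) integrable_on {0..1::real}") (auto intro: integral_nonneg simp: not_integrable_integral)

lemma L1_le_Lp: assumes "in_Lp p f" "p \<ge> 1"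
  shows "integral {0..1} (\<lambda>x. \<bar>f x\<bar>) \<le> (Lp_pow p f) powr (1/p)"
proof (cases "p = 1")
  case True
  then show ?thesis using Lp_pow_nonneg[of p f] by (simp add: Lp_pow_def)
next
  case False
  then have p1: "p > 1" using assms by simp
  define A where "A = Lp_pow p f"
  have A0: "A \<ge> 0" unfolding A_def by (rule Lp_pow_nonneg)
  have fi: "(\<lambda>x. \<bar>f x\<bar>) integrable_on {0..1}" using inLp_abs_int assms by blast
  have pi: "(\<lambda>x. \<bar>f x\<bar> powr p) integrable_on {0..1}" using assms by (simp add: in_Lp_def)
  have key: "integral {0..1} (\<lambda>x. \<bar>f x\<bar>) \<le> lam * (A / lam powr p / p + (p-1)/p)" if "lam > 0" for lam
  proof -
    have "integral {0..1} (\<lambda>x. \<bar>f x\<bar>) \<le> integral {0..1} (\<lambda>x. lam * (\<bar>f x\<bar> powr p / lam powr p / p + (p-1)/p))"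
    proof (rule integral_le[OF fi])
      have II: "(\<lambda>x. \<bar>f x\<bar> powr p / lam powr p / p + (p-1)/p) integrable_on {0..1}"
        using integrable_on_divide[OF pi, of "lam powr p * p"] by (intro integrable_add) (auto simp: divide_divide_eq_left)
      then show "(\<lambda>x. lam * (\<bar>f x\<bar> powr p / lam powr p / p + (p-1)/p)) integrable_on {0..1}"
        using integrable_cmul[OF II, of lam] by simp
    qed (use young_pt[OF p1 that] in auto)
    also have "\<dots> = lam * (A / lam powr p / p + (p-1)/p)"
    proof -
      have d: "(\<lambda>x. \<bar>f x\<bar> powr p / (lam powr p * p)) integrable_on {0..1}"
        using integrable_on_divide[OF pi, of "lam powr p * p"] by simp
      have "integral {0..1} (\<lambda>x. \<bar>f x\<bar> powr p / (lam powr p * p) + (p-1)/p) =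
         integral {0..1} (\<lambda>x. \<bar>f x\<bar> powr p / (lam powr p * p)) + integral {0..1} (\<lambda>x::real. (p-1)/p)"
        by (rule Henstock_Kurzweil_Integration.integral_add[OF d]) (rule integrable_const_ivl)
      then show ?thesis by (simp add: A_def Lp_pow_def)
    qed
    finally show ?thesis .
  qed
  show ?thesis
  proof (cases "A = 0")
    case True
    have "integral {0..1} (\<lambda>x. \<bar>f x\<bar>) \<le> e" if "e > 0" for e
    proof -
      have "integral {0..1} (\<lambda>x. \<bar>f x\<bar>) \<le> e * (A / e powr p / p + (p-1)/p)" using key that by blast
      also have "\<dots> \<le> e" using True that p1 by (simp add: field_simps)
      finally show ?thesis .
    qed
    then have "integral {0..1} (\<lambda>x. \<bar>f x\<bar>) \<le> 0" by (meson dense not_le)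
    then show ?thesis using True by (simp add: A_def)
  next
    case False
    then have Ap: "A > 0" using A0 by simp
    have e: "(A powr (1/p)) powr p = A" using Ap p1 by (simp add: powr_powr)
    have "integral {0..1} (\<lambda>x. \<bar>f x\<bar>) \<le> A powr (1/p) * (A / (A powr (1/p)) powr p / p + (p-1)/p)"
      using key Ap by simp
    also have "\<dots> = A powr (1/p)" using e Ap p1 by (simp add: field_simps)
    finally show ?thesis by (simp add: A_def)
  qed
qed

lemma powr_add_le: fixes a b p :: real assumes "p \<ge> 0"
  shows "\<bar>a + b\<bar> powr p \<le> 2 powr p * (\<bar>a\<bar> powr p + \<bar>b\<bar> powr p)"
proof -
  define m where "m = max \<bar>a\<bar> \<bar>b\<bar>"
  have "\<bar>a + b\<bar> \<le> 2 * m" unfolding m_def by linarith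
  then have "\<bar>a + b\<bar> powr p \<le> (2 * m) powr p" using assms by (intro powr_mono2) auto
  also have "\<dots> = 2 powr p * m powr p" unfolding m_def by (simp add: powr_mult)
  also have "m powr p \<le> \<bar>a\<bar> powr p + \<bar>b\<bar> powr p" unfolding m_def
    by (cases "\<bar>a\<bar> \<le> \<bar>b\<bar>") (auto simp: max_def)
  finally show ?thesis by simp
qed

lemma Lp_add: assumes "in_Lp p f" "in_Lp p g" "p \<ge> 1" shows "in_Lp p (\<lambda>x. f x + g x)"
proof -
  have mf: "f \<in> borel_measurable (lebesgue_on {0..1})" and mg: "g \<in> borel_measurable (lebesgue_on {0..1})"
    using inLp_meas assms by auto
  have m: "(\<lambda>x. f x + g x) \<in> borel_measurable (lebesgue_on {0..1})" using borel_measurable_add[OF mf mg] .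
  have i: "(\<lambda>x. 2 powr p * (\<bar>f x\<bar> powr p + \<bar>g x\<bar> powr p)) integrable_on {0..1}"
  proof -
    have i0: "(\<lambda>x. \<bar>f x\<bar> powr p + \<bar>g x\<bar> powr p) integrable_on {0..1}"
      using assms unfolding in_Lp_def by (intro integrable_add) auto
    show ?thesis using integrable_cmul[OF i0, of "2 powr p"] by simp
  qed
  have "(\<lambda>x. \<bar>f x + g x\<bar> powr p) integrable_on {0..1}"
  proof (rule measurable_bounded_by_integrable_imp_integrable_real[OF _ i])
    show "(\<lambda>x. \<bar>f x + g x\<bar> powr p) \<in> borel_measurable (lebesgue_on {0..1})" by (rule measurable_abs_powr[OF m])
    fix x assume "x \<in> {0..1::real}"
    have "0 \<le> \<bar>f x + g x\<bar> powr p" by simp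
    then show "\<bar>\<bar>f x + g x\<bar> powr p\<bar> \<le> 2 powr p * (\<bar>f x\<bar> powr p + \<bar>g x\<bar> powr p)"
      using powr_add_le[of p "f x" "g x"] assms(3) by linarith
  qed simp
  then show ?thesis unfolding in_Lp_def using m measurable_on_iff_borel_measurable[of "{0..1::real}"] by auto
qed

lemma Lp_cmul: assumes "in_Lp p f" "p \<ge> 0" shows "in_Lp p (\<lambda>x. c * f x)"
proof -
  have mf: "f \<in> borel_measurable (lebesgue_on {0..1})" using inLp_meas assms by auto
  have m: "(\<lambda>x. c * f x) \<in> borel_measurable (lebesgue_on {0..1})" using borel_measurable_times[OF borel_measurable_const mf] .
  have "(\<lambda>x. \<bar>c\<bar> powr p * \<bar>f x\<bar> powr p) integrable_on {0..1}"
    using assms integrable_cmul[of "\<lambda>x. \<bar>f x\<bar> powr p" "{0..1}" "\<bar>c\<bar> powr p"] unfolding in_Lp_def by simp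
  then have "(\<lambda>x. \<bar>c * f x\<bar> powr p) integrable_on {0..1}" by (simp add: abs_mult powr_mult)
  then show ?thesis unfolding in_Lp_def using m measurable_on_iff_borel_measurable[of "{0..1::real}"] by auto
qed

lemma Lp_diff: assumes "in_Lp p f" "in_Lp p g" "p \<ge> 1" shows "in_Lp p (\<lambda>x. f x - g x)"
proof -
  have "in_Lp p (\<lambda>x. f x + (-1) * g x)" using Lp_add[OF assms(1) Lp_cmul[OF assms(2), of "-1"]] assms(3) by simp
  moreover have "(\<lambda>x. f x + (-1) * g x) = (\<lambda>x. f x - g x)" by auto
  ultimately show ?thesis by simp
qed

lemma Lp_quot: assumes "in_Lp p f" "in_Lp p g" "in_Lp p h" "p \<ge> 1"
  shows "in_Lp p (\<lambda>x. (f x - g x) / d - h x)"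
proof -
  have "in_Lp p (\<lambda>x. (1/d) * (f x - g x))" using Lp_cmul[OF Lp_diff[OF assms(1,2,4)], of "1/d"] assms(4) by simp
  from Lp_diff[OF this assms(3,4)] show ?thesis by simp
qed

lemma prim_bound:
  assumes "in_Lp p f" "p \<ge> 1" "x \<in> {0..1}"
  shows "\<bar>integral {0..x} f\<bar> \<le> integral {0..1} (\<lambda>y. \<bar>f y\<bar>)"
proof -
  have fi: "f integrable_on {0..1}" and ai: "(\<lambda>y. \<bar>f y\<bar>) integrable_on {0..1}"
    using inLp_abs_int assms by auto
  have sub: "{0..x} \<subseteq> {0..1}" using assms by auto
  have fi': "f integrable_on {0..x}" using integrable_on_subinterval[OF fi sub] .
  have ai': "(\<lambda>y. \<bar>f y\<bar>) integrable_on {0..x}" using integrable_on_subinterval[OF ai sub] .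
  have "norm (integral {0..x} f) \<le> integral {0..x} (\<lambda>y. \<bar>f y\<bar>)"
    by (rule integral_norm_bound_integral[OF fi' ai']) auto
  also have "\<dots> \<le> integral {0..1} (\<lambda>y. \<bar>f y\<bar>)"
    by (rule integral_subset_le[OF sub ai' ai]) auto
  finally show ?thesis by simp
qed

lemma prim_bound_Lp:
  assumes "in_Lp p f" "p \<ge> 1" "x \<in> {0..1}"
  shows "\<bar>integral {0..x} f\<bar> \<le> (Lp_pow p f) powr (1/p)"
  using prim_bound[OF assms] L1_le_Lp[OF assms(1,2)] by linarith

lemma weak_repr: assumes "has_weak_deriv_Lp p f fx" "f 0 = 0" "x \<in> {0..1}" shows "f x = integral {0..x} fx"
proof -
  have "f x = f 0 + integral {0..x} fx" using assms(1,3) unfolding has_weak_deriv_Lp_def by blast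
  then show ?thesis using assms(2) by linarith
qed

lemma weak_cont: assumes "has_weak_deriv_Lp p f fx" "p \<ge> 1" shows "continuous_on {0..1} f"
proof -
  have "fx integrable_on {0..1}" using assms inLp_abs_int unfolding has_weak_deriv_Lp_def by blast
  then have "continuous_on {0..1} (\<lambda>x. f 0 + integral {0..x} fx)"
    by (intro continuous_intros indefinite_integral_continuous_1)
  then show ?thesis
  proof (rule continuous_on_eq)
    fix x :: real assume "x \<in> {0..1}"
    then show "f 0 + integral {0..x} fx = f x" using assms(1) unfolding has_weak_deriv_Lp_def by metis
  qed
qed

lemma ev_nonneg: "eventually (\<lambda>s. s \<in> {0::real..}) (at t within {0..})"
  unfolding eventually_at by (intro exI[of _ 1]) auto

lemma ev_near: "\<delta> > 0 \<Longrightarrow> eventually (\<lambda>s. s \<noteq> t \<and> \<bar>s - t\<bar> < \<delta>) (at (t::real) within S)"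
  unfolding eventually_at by (intro exI[of _ \<delta>]) (auto simp: dist_real_def)

lemma quot_unif:
  fixes z zx zxx zt ztx :: "real \<Rightarrow> real \<Rightarrow> real"
  assumes p: "p \<ge> 1" and t: "t \<ge> 0"
    and W: "\<forall>s\<ge>0. in_W2p_W10p p (z s) (zx s) (zxx s)"
    and Wt: "in_W10p p (zt t) (ztx t)"
    and lim: "((\<lambda>s. Lp_pow p (\<lambda>x. (zx s x - zx t x) / (s - t) - ztx t x)) \<longlongrightarrow> 0) (at t within {0..})"
  shows "\<forall>\<epsilon>>0. eventually (\<lambda>s. \<forall>y\<in>{0..1}. \<bar>(z s y - z t y) / (s - t) - zt t y\<bar> \<le> \<epsilon>) (at t within {0..})"
proof (intro allI impI)
  fix \<epsilon> :: real assume e: "\<epsilon> > 0"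
  have "eventually (\<lambda>s. dist (Lp_pow p (\<lambda>x. (zx s x - zx t x) / (s - t) - ztx t x)) 0 < \<epsilon> powr p) (at t within {0..})"
    using tendstoD[OF lim] e by simp
  then show "eventually (\<lambda>s. \<forall>y\<in>{0..1}. \<bar>(z s y - z t y) / (s - t) - zt t y\<bar> \<le> \<epsilon>) (at t within {0..})"
    using ev_nonneg
  proof eventually_elim
    case (elim s)
    then have s: "s \<ge> 0" by simp
    have Ws: "in_W2p_W10p p (z s) (zx s) (zxx s)" and Wt': "in_W2p_W10p p (z t) (zx t) (zxx t)"
      using W s t by auto
    have Ls: "in_Lp p (zx s)" and Lt: "in_Lp p (zx t)" and Lx: "in_Lp p (ztx t)"
      using Ws Wt' Wt unfolding in_W2p_W10p_def in_W10p_def has_weak_deriv_Lp_def by auto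
    define Q where "Q x = (zx s x - zx t x) / (s - t) - ztx t x" for x
    have LQ: "in_Lp p Q" unfolding Q_def by (rule Lp_quot[OF Ls Lt Lx p])
    have LQb: "Lp_pow p Q < \<epsilon> powr p" using elim Lp_pow_nonneg[of p Q] unfolding Q_def by simp
    have LQb': "(Lp_pow p Q) powr (1/p) < \<epsilon>"
    proof -
      have "(Lp_pow p Q) powr (1/p) < (\<epsilon> powr p) powr (1/p)"
        by (rule powr_less_mono2) (use p LQb Lp_pow_nonneg in auto)
      also have "\<dots> = \<epsilon>" using p e by (simp add: powr_powr)
      finally show ?thesis .
    qed
    show "\<forall>y\<in>{0..1}. \<bar>(z s y - z t y) / (s - t) - zt t y\<bar> \<le> \<epsilon>"
    proof
      fix y :: real assume y: "y \<in> {0..1}"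
      have sub: "{0..y} \<subseteq> {0..1}" using y by auto
      have i1: "zx s integrable_on {0..y}" using integrable_on_subinterval[OF inLp_abs_int(2)[OF Ls p] sub] .
      have i2: "zx t integrable_on {0..y}" using integrable_on_subinterval[OF inLp_abs_int(2)[OF Lt p] sub] .
      have i3: "ztx t integrable_on {0..y}" using integrable_on_subinterval[OF inLp_abs_int(2)[OF Lx p] sub] .
      have zs: "z s y = integral {0..y} (zx s)" using Ws y weak_repr unfolding in_W2p_W10p_def by blast
      have zt': "z t y = integral {0..y} (zx t)" using Wt' y weak_repr unfolding in_W2p_W10p_def by blast
      have ztt: "zt t y = integral {0..y} (ztx t)" using Wt y weak_repr unfolding in_W10p_def by blast
      have "integral {0..y} Q = integral {0..y} (\<lambda>x. (zx s x - zx t x) / (s - t)) - integral {0..y} (ztx t)"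
        unfolding Q_def by (rule integral_diff[OF integrable_on_divide[OF integrable_diff[OF i1 i2]] i3])
      also have "integral {0..y} (\<lambda>x. (zx s x - zx t x) / (s - t)) = (integral {0..y} (zx s) - integral {0..y} (zx t)) / (s - t)"
        using integral_diff[OF i1 i2] by simp
      finally have "integral {0..y} Q = (z s y - z t y) / (s - t) - zt t y" using zs zt' ztt by simp
      then show "\<bar>(z s y - z t y) / (s - t) - zt t y\<bar> \<le> \<epsilon>"
        using prim_bound_Lp[OF LQ p y] LQb' by simp
    qed
  qed
qed

lemma cont_bounded: fixes f :: "real \<Rightarrow> real" assumes "continuous_on {0..1::real} f" shows "\<exists>M\<ge>0. \<forall>y\<in>{0..1}. \<bar>f y\<bar> \<le> M"
proof -
  have "bounded (f ` {0..1})" by (rule compact_imp_bounded[OF compact_continuous_image[OF assms]]) simp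
  then obtain M where "M > 0" "\<forall>x\<in>f ` {0..1}. norm x \<le> M" unfolding bounded_pos by blast
  then show ?thesis by (intro exI[of _ M]) auto
qed

lemma cont_meas: "continuous_on {0..1::real} f \<Longrightarrow> f \<in> borel_measurable (lebesgue_on {0..1})"
  by (rule continuous_imp_measurable_on_sets_lebesgue) auto

lemma A_le_pE: assumes "in_Lp p a" "in_Lp p b" "p \<ge> 1"
  shows "Lp_pow p a \<le> integral {0..1} (\<lambda>x. \<bar>a x + b x\<bar> powr p + \<bar>a x - b x\<bar> powr p)"
proof -
  have i1: "(\<lambda>x. \<bar>a x + b x\<bar> powr p) integrable_on {0..1}" using Lp_add[OF assms] unfolding in_Lp_def by blast
  have i2: "(\<lambda>x. \<bar>a x - b x\<bar> powr p) integrable_on {0..1}" using Lp_diff[OF assms] unfolding in_Lp_def by blast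
  have ia: "(\<lambda>x. \<bar>a x\<bar> powr p) integrable_on {0..1}" using assms unfolding in_Lp_def by blast
  show ?thesis unfolding Lp_pow_def
  proof (rule integral_le[OF ia Henstock_Kurzweil_Integration.integrable_add[OF i1 i2]])
    fix x :: real
    define m where "m = max \<bar>a x + b x\<bar> \<bar>a x - b x\<bar>"
    have "\<bar>a x\<bar> \<le> m" unfolding m_def by linarith
    then have "\<bar>a x\<bar> powr p \<le> m powr p" using assms by (intro powr_mono2) auto
    also have "m powr p \<le> \<bar>a x + b x\<bar> powr p + \<bar>a x - b x\<bar> powr p" unfolding m_def
      by (cases "\<bar>a x + b x\<bar> \<le> \<bar>a x - b x\<bar>") (auto simp: max_def)
    finally show "\<bar>a x\<bar> powr p \<le> \<bar>a x + b x\<bar> powr p + \<bar>a x - b x\<bar> powr p" .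
  qed
qed

lemma beta_L1:
  assumes f: "in_Lp p f" and p: "p \<ge> 1" and bc: "continuous_on {0..1} \<beta>" and b01: "\<forall>x\<in>{0..1}. 0 \<le> \<beta> x \<and> \<beta> x \<le> 1"
  shows "integral {0..1} (\<lambda>x. \<beta> x * \<bar>f x\<bar>) \<le> (integral {0..1} (\<lambda>x. \<beta> x * \<bar>f x\<bar> powr p)) powr (1/p)"
proof -
  define g where "g x = \<beta> x powr (1/p) * f x" for x
  have mf: "f \<in> borel_measurable (lebesgue_on {0..1})" using inLp_meas f by blast
  have mb: "\<beta> \<in> borel_measurable (lebesgue_on {0..1})" using cont_meas bc by blast
  have mg: "g \<in> borel_measurable (lebesgue_on {0..1})" unfolding g_def using mf mb by measurable
  have gp: "\<bar>g x\<bar> powr p = \<beta> x * \<bar>f x\<bar> powr p" if "x \<in> {0..1}" for x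
  proof -
    have "\<bar>g x\<bar> powr p = (\<beta> x powr (1/p)) powr p * \<bar>f x\<bar> powr p"
      unfolding g_def by (simp add: abs_mult powr_mult)
    also have "(\<beta> x powr (1/p)) powr p = \<beta> x" using b01 that p by (simp add: powr_powr)
    finally show ?thesis .
  qed
  have ifp: "(\<lambda>x. \<bar>f x\<bar> powr p) integrable_on {0..1}" using f unfolding in_Lp_def by blast
  have ibf: "(\<lambda>x. \<beta> x * \<bar>f x\<bar> powr p) integrable_on {0..1}"
  proof (rule measurable_bounded_by_integrable_imp_integrable_real[OF _ ifp])
    show "(\<lambda>x. \<beta> x * \<bar>f x\<bar> powr p) \<in> borel_measurable (lebesgue_on {0..1})" using mf mb by measurable
    fix x :: real assume x: "x \<in> {0..1}"
    then have "0 \<le> \<beta> x" "\<beta> x \<le> 1" using b01 by auto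
    then show "\<bar>\<beta> x * \<bar>f x\<bar> powr p\<bar> \<le> \<bar>f x\<bar> powr p"
      by (simp add: abs_mult mult_left_le_one_le)
  qed simp
  have Lg: "in_Lp p g"
  proof -
    have "(\<lambda>x. \<bar>g x\<bar> powr p) integrable_on {0..1}"
      using ibf integrable_cong[of "{0..1}" "\<lambda>x. \<bar>g x\<bar> powr p" "\<lambda>x. \<beta> x * \<bar>f x\<bar> powr p"] gp by blast
    then show ?thesis unfolding in_Lp_def using mg measurable_on_iff_borel_measurable[of "{0..1::real}"] by auto
  qed
  have Lpg: "Lp_pow p g = integral {0..1} (\<lambda>x. \<beta> x * \<bar>f x\<bar> powr p)"
    unfolding Lp_pow_def by (rule integral_cong) (use gp in auto)
  have ig: "(\<lambda>x. \<bar>g x\<bar>) integrable_on {0..1}" using inLp_abs_int[OF Lg p] by blast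
  have le: "\<beta> x * \<bar>f x\<bar> \<le> \<bar>g x\<bar>" if "x \<in> {0..1}" for x
  proof -
    have b: "0 \<le> \<beta> x" "\<beta> x \<le> 1" using b01 that by auto
    have "\<beta> x powr 1 \<le> \<beta> x powr (1/p)" using b p by (intro powr_mono') auto
    then have "\<beta> x \<le> \<beta> x powr (1/p)" using b by (cases "\<beta> x = 0") auto
    then show ?thesis unfolding g_def by (simp add: abs_mult mult_right_mono)
  qed
  have ibf1: "(\<lambda>x. \<beta> x * \<bar>f x\<bar>) integrable_on {0..1}"
  proof (rule measurable_bounded_by_integrable_imp_integrable_real[OF _ ig])
    show "(\<lambda>x. \<beta> x * \<bar>f x\<bar>) \<in> borel_measurable (lebesgue_on {0..1})" using mf mb by measurable
    fix x :: real assume x: "x \<in> {0..1}"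
    then show "\<bar>\<beta> x * \<bar>f x\<bar>\<bar> \<le> \<bar>g x\<bar>" using le b01 by (simp add: abs_mult)
  qed simp
  have "integral {0..1} (\<lambda>x. \<beta> x * \<bar>f x\<bar>) \<le> integral {0..1} (\<lambda>x. \<bar>g x\<bar>)"
    by (rule integral_le[OF ibf1 ig]) (use le in auto)
  also have "\<dots> \<le> (Lp_pow p g) powr (1/p)" by (rule L1_le_Lp[OF Lg p])
  finally show ?thesis using Lpg by simp
qed

lemma ftc_abs_bound:
  fixes u g :: "real \<Rightarrow> real"
  assumes "lo \<le> hi" "continuous_on {lo..hi} u"
    "\<And>x. x \<in> {lo<..<hi} \<Longrightarrow> (u has_real_derivative g x) (at x)"
    "continuous_on {lo..hi} g"
  shows "\<bar>u hi - u lo\<bar> \<le> integral {lo..hi} (\<lambda>y. \<bar>g y\<bar>)"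
proof -
  have "(g has_integral (u hi - u lo)) {lo..hi}"
    using assms by (intro fundamental_theorem_of_calculus_interior)
      (auto simp: has_real_derivative_iff_has_vector_derivative)
  then have e: "integral {lo..hi} g = u hi - u lo" by (rule integral_unique)
  have gi: "g integrable_on {lo..hi}" using assms(4) integrable_continuous_interval by blast
  have ai: "(\<lambda>y. \<bar>g y\<bar>) integrable_on {lo..hi}"
    using assms(4) by (intro integrable_continuous_interval continuous_intros)
  have "norm (integral {lo..hi} g) \<le> integral {lo..hi} (\<lambda>y. \<bar>g y\<bar>)"
    by (rule integral_norm_bound_integral[OF gi ai]) auto
  then show ?thesis using e by simp
qed

lemma dir_bound:
  fixes w w' g :: "real \<Rightarrow> real"
  assumes wc: "continuous_on {0..1} w" and w0: "w 0 = 0" and w1: "w 1 = 0"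
    and d: "\<forall>x\<in>{0<..<1}. (w has_real_derivative w' x) (at x) \<and> (w' has_real_derivative g x) (at x)"
    and gc: "continuous_on {0..1} g" and x: "x \<in> {0..1}"
  shows "\<bar>w x\<bar> \<le> integral {0..1} (\<lambda>y. \<bar>g y\<bar>)"
proof -
  define G where "G = integral {0..1} (\<lambda>y. \<bar>g y\<bar>)"
  have ai: "(\<lambda>y. \<bar>g y\<bar>) integrable_on {0..1}"
    using gc by (intro integrable_continuous_interval continuous_intros)
  have G0: "G \<ge> 0" unfolding G_def by (rule integral_nonneg[OF ai]) auto
  have Gsub: "integral {a..b} (\<lambda>y. \<bar>g y\<bar>) \<le> G" if "0 \<le> a" "b \<le> 1" for a b
  proof (cases "a \<le> b")
    case True
    have "{a..b} \<subseteq> {0..1}" using that by auto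
    moreover have "(\<lambda>y. \<bar>g y\<bar>) integrable_on {a..b}"
      using integrable_on_subinterval[OF ai] that by auto
    ultimately show ?thesis unfolding G_def by (intro integral_subset_le ai) auto
  next
    case False then show ?thesis using G0 by simp
  qed
  obtain l \<xi> where \<xi>: "0 < \<xi>" "\<xi> < 1" "DERIV w \<xi> :> l" "w 1 - w 0 = (1 - 0) * l"
  proof -
    have dif: "w differentiable (at u)" if "0 < u" "u < 1" for u
    proof -
      have "u \<in> {0<..<1}" using that by simp
      then have "(w has_real_derivative w' u) (at u)" using d by blast
      then show ?thesis unfolding real_differentiable_def by blast
    qed
    then obtain l \<xi> where "0 < \<xi>" "\<xi> < 1" "DERIV w \<xi> :> l" "w 1 - w 0 = (1 - 0) * l"
      using MVT[of 0 1 w] wc dif by auto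
    then show ?thesis using that by blast
  qed
  have w'\<xi>: "w' \<xi> = 0"
  proof -
    have "\<xi> \<in> {0<..<1}" using \<xi> by simp
    then have "DERIV w \<xi> :> w' \<xi>" using d by blast
    then have "w' \<xi> = l" using \<xi>(3) DERIV_unique by blast
    then show ?thesis using \<xi>(4) w0 w1 by simp
  qed
  have w'b: "\<bar>w' y\<bar> \<le> G" if y: "y \<in> {0<..<1}" for y
  proof -
    define lo where "lo = min \<xi> y"
    define hi where "hi = max \<xi> y"
    have sub: "{lo..hi} \<subseteq> {0<..<1}" using y \<xi> unfolding lo_def hi_def by auto
    have "\<bar>w' hi - w' lo\<bar> \<le> integral {lo..hi} (\<lambda>y. \<bar>g y\<bar>)"
    proof (rule ftc_abs_bound)
      show "lo \<le> hi" unfolding lo_def hi_def by simp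
      show "continuous_on {lo..hi} w'"
        using sub d by (intro continuous_at_imp_continuous_on ballI DERIV_isCont) auto
      show "continuous_on {lo..hi} g" using sub by (intro continuous_on_subset[OF gc]) auto
      show "(w' has_real_derivative g x) (at x)" if "x \<in> {lo<..<hi}" for x
      proof -
        have "x \<in> {lo..hi}" using that by auto
        then have "x \<in> {0<..<1}" using sub by blast
        then show ?thesis using d by blast
      qed
    qed
    also have "\<dots> \<le> G" using y \<xi> by (intro Gsub) (auto simp: lo_def hi_def)
    finally have "\<bar>w' hi - w' lo\<bar> \<le> G" .
    then show ?thesis using w'\<xi> unfolding lo_def hi_def by (cases "\<xi> \<le> y") auto
  qed
  show ?thesis
  proof (cases "x = 0 \<or> x = 1")
    case True then show ?thesis using w0 w1 G0 G_def by auto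
  next
    case False
    then have x01: "0 < x" "x < 1" using x by auto
    obtain l \<eta> where \<eta>: "0 < \<eta>" "\<eta> < x" "DERIV w \<eta> :> l" "w x - w 0 = (x - 0) * l"
    proof -
      have c: "continuous_on {0..x} w" using x01 by (intro continuous_on_subset[OF wc]) auto
      have "w differentiable (at u)" if "0 < u" "u < x" for u
      proof -
        have "u \<in> {0<..<1}" using that x01 by simp
        then have "(w has_real_derivative w' u) (at u)" using d by blast
        then show ?thesis unfolding real_differentiable_def by blast
      qed
      then show ?thesis using MVT[OF x01(1) c] that by blast
    qed
    have "\<eta> \<in> {0<..<1}" using \<eta> x01 by simp
    then have "DERIV w \<eta> :> w' \<eta>" using d by blast
    then have "l = w' \<eta>" using \<eta>(3) DERIV_unique by blast
    then have "\<bar>l\<bar> \<le> G" using w'b \<eta> x01 by auto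
    then have "\<bar>w x\<bar> \<le> x * G" using \<eta> w0 x01 by (simp add: abs_mult)
    also have "\<dots> \<le> G" using x01 G0 by (simp add: mult_left_le_one_le)
    finally show ?thesis unfolding G_def .
  qed
qed

lemma at_within_01: "x \<in> {0<..<1::real} \<Longrightarrow> at x within {0..1} = at x"
  by (rule at_within_interior) auto

lemma dir_exists:
  fixes h :: "real \<Rightarrow> real"
  assumes hc: "continuous_on {0..1} h"
  shows "\<exists>w. continuous_on {0..1} w \<and> w 0 = 0 \<and> w 1 = 0 \<and>
     (\<exists>w'. \<forall>x\<in>{0<..<1}. (w has_real_derivative w' x) (at x) \<and> (w' has_real_derivative h x) (at x))"
proof -
  define H where "H x = integral {0..x} h" for x
  have Hc: "continuous_on {0..1} H" unfolding H_def
    using hc by (intro indefinite_integral_continuous_1 integrable_continuous_interval)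
  define W where "W x = integral {0..x} H" for x
  have Wc: "continuous_on {0..1} W" unfolding W_def
    using Hc by (intro indefinite_integral_continuous_1 integrable_continuous_interval)
  define w where "w x = W x - x * W 1" for x
  define w' where "w' x = H x - W 1" for x
  have "continuous_on {0..1} w" unfolding w_def using Wc by (intro continuous_intros)
  moreover have "w 0 = 0" "w 1 = 0" by (simp_all add: w_def W_def)
  moreover have "\<forall>x\<in>{0<..<1}. (w has_real_derivative w' x) (at x) \<and> (w' has_real_derivative h x) (at x)"
  proof
    fix x :: real assume x: "x \<in> {0<..<1}"
    then have x': "x \<in> {0..1}" by auto
    have "(H has_real_derivative h x) (at x)"
      using integral_has_real_derivative[OF hc x'] at_within_01[OF x] unfolding H_def by simp
    then have 1: "(w' has_real_derivative h x) (at x)" unfolding w'_def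
      by (auto intro!: derivative_eq_intros)
    have "(W has_real_derivative H x) (at x)"
      using integral_has_real_derivative[OF Hc x'] at_within_01[OF x] unfolding W_def by simp
    then have "(w has_real_derivative w' x) (at x)" unfolding w_def w'_def
      by (auto intro!: derivative_eq_intros)
    with 1 show "(w has_real_derivative w' x) (at x) \<and> (w' has_real_derivative h x) (at x)" by simp
  qed
  ultimately show ?thesis by blast
qed

definition phi :: "real \<Rightarrow> real \<Rightarrow> real" where
  "phi p u = sgn u * \<bar>u\<bar> powr (p - 1)"

definition dphi :: "real \<Rightarrow> real \<Rightarrow> real" where
  "dphi p u = (if p = 2 then 1 else (p - 1) * \<bar>u\<bar> powr (p - 2))"

lemma phi2: "phi 2 u = u"
  by (cases "u = 0") (auto simp: phi_def sgn_if)

lemma abs_phi: "\<bar>phi p u\<bar> = \<bar>u\<bar> powr (p - 1)"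
  by (cases "u = 0") (auto simp: phi_def sgn_if)

lemma dphi_cont: assumes "p \<ge> 2" shows "continuous_on UNIV (dphi p)"
proof (cases "p = 2")
  case True then show ?thesis by (simp add: dphi_def)
next
  case False
  then have "p - 2 > 0" using assms by simp
  then have "continuous_on UNIV (\<lambda>u::real. (p - 1) * \<bar>u\<bar> powr (p - 2))"
    by (intro continuous_intros continuous_on_powr') auto
  then show ?thesis using False by (simp add: dphi_def)
qed

lemma dphi_nonneg: "p \<ge> 2 \<Longrightarrow> dphi p u \<ge> 0"
  by (simp add: dphi_def)

lemma phi_deriv: assumes "p \<ge> 2" shows "(phi p has_real_derivative dphi p u) (at u)"
proof (cases "p = 2")
  case True
  then have "phi p = (\<lambda>u. u)" using phi2 by auto
  then show ?thesis using True by (simp add: dphi_def)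
next
  case False
  then have p2: "p > 2" using assms by simp
  consider "u > 0" | "u < 0" | "u = 0" by linarith
  then show ?thesis
  proof cases
    case 1
    have "((\<lambda>v. v powr (p - 1)) has_real_derivative (p - 1) * u powr (p - 1 - 1)) (at u)"
      using has_real_derivative_powr[OF 1] .
    then have d: "((\<lambda>v. v powr (p - 1)) has_real_derivative dphi p u) (at u)"
      using 1 False by (simp add: dphi_def)
    show ?thesis
      by (rule has_field_derivative_transform_within_open[OF d, of "{0<..}"]) (use 1 in \<open>auto simp: phi_def\<close>)
  next
    case 2
    have "((\<lambda>v. - ((- v) powr (p - 1))) has_real_derivative - ((p - 1) * (-u) powr (p - 1 - 1) * (-1))) (at u)"
      using 2 by (auto intro!: derivative_eq_intros)
    then have d: "((\<lambda>v. - ((- v) powr (p - 1))) has_real_derivative dphi p u) (at u)"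
      using 2 False by (simp add: dphi_def)
    show ?thesis
      by (rule has_field_derivative_transform_within_open[OF d, of "{..<0}"]) (use 2 in \<open>auto simp: phi_def\<close>)
  next
    case 3
    have l: "((\<lambda>v. \<bar>v\<bar> powr (p - 2)) \<longlongrightarrow> 0) (at (0::real))"
      by (rule tendsto_zero_powrI) (use p2 in \<open>auto intro!: tendsto_eq_intros\<close>)
    have "((\<lambda>v. (phi p v - phi p 0) / (v - 0)) \<longlongrightarrow> 0) (at 0)"
    proof (rule Lim_transform_within[OF l zero_less_one])
      fix v :: real assume "0 < dist v 0" "dist v 0 < 1"
      then have v: "v \<noteq> 0" by simp
      have "\<bar>v\<bar> powr (p - 1) = \<bar>v\<bar> powr (1 + (p - 2))" by simp
      also have "\<dots> = \<bar>v\<bar> powr 1 * \<bar>v\<bar> powr (p - 2)" by (rule powr_add)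
      also have "\<dots> = \<bar>v\<bar> * \<bar>v\<bar> powr (p - 2)" using v by simp
      finally have e: "\<bar>v\<bar> powr (p - 1) = \<bar>v\<bar> * \<bar>v\<bar> powr (p - 2)" .
      then show "\<bar>v\<bar> powr (p - 2) = (phi p v - phi p 0) / (v - 0)"
        using v e by (auto simp: phi_def sgn_if field_simps)
    qed
    then show ?thesis using 3 False by (simp add: has_field_derivative_iff dphi_def)
  qed
qed

lemma mvt_phi: assumes "p \<ge> 2"
  shows "\<exists>\<xi>. \<bar>\<xi> - b\<bar> \<le> \<bar>a - b\<bar> \<and> phi p a - phi p b = (a - b) * dphi p \<xi>"
proof -
  have der: "\<And>x. DERIV (phi p) x :> dphi p x" using phi_deriv[OF assms] by blast
  consider "a = b" | "a < b" | "b < a" by linarith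
  then show ?thesis
  proof cases
    case 1 then show ?thesis by (intro exI[of _ b]) simp
  next
    case 2
    obtain z where "a < z" "z < b" "phi p b - phi p a = (b - a) * dphi p z"
      using MVT2[OF 2 der] by blast
    then show ?thesis by (intro exI[of _ z]) (auto simp: algebra_simps)
  next
    case 3
    obtain z where "b < z" "z < a" "phi p a - phi p b = (a - b) * dphi p z"
      using MVT2[OF 3 der] by blast
    then show ?thesis by (intro exI[of _ z]) (auto simp: algebra_simps)
  qed
qed

lemma dphi_bound: assumes "p \<ge> 2" "\<bar>u\<bar> \<le> R"
  shows "dphi p u \<le> (p - 1) * R powr (p - 2) + 1"
proof (cases "p = 2")
  case True then show ?thesis by (simp add: dphi_def)
next
  case False
  then have "\<bar>u\<bar> powr (p - 2) \<le> R powr (p - 2)" using assms by (intro powr_mono2) auto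
  then have "(p - 1) * \<bar>u\<bar> powr (p - 2) \<le> (p - 1) * R powr (p - 2)" using assms by (intro mult_left_mono) auto
  then show ?thesis using False by (simp add: dphi_def)
qed

lemma unif_phi:
  fixes Z :: "real \<Rightarrow> real \<Rightarrow> real" and D :: "real \<Rightarrow> real" and F :: "real filter"
  assumes p: "p \<ge> 2"
    and R: "\<forall>y\<in>Y. \<bar>Z t y\<bar> \<le> R" and M: "\<forall>y\<in>Y. \<bar>D y\<bar> \<le> M" and M0: "M \<ge> 0" and R0: "R \<ge> 0"
    and q: "\<forall>\<epsilon>>0. eventually (\<lambda>s. \<forall>y\<in>Y. \<bar>(Z s y - Z t y) / (s - t) - D y\<bar> \<le> \<epsilon>) F"
    and F: "\<forall>\<delta>>0. eventually (\<lambda>s. s \<noteq> t \<and> \<bar>s - t\<bar> < \<delta>) F"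
  shows "\<forall>\<epsilon>>0. eventually (\<lambda>s. \<forall>y\<in>Y.
     \<bar>(phi p (Z s y) - phi p (Z t y)) / (s - t) - dphi p (Z t y) * D y\<bar> \<le> \<epsilon>) F"
proof (intro allI impI)
  fix \<epsilon> :: real assume e: "\<epsilon> > 0"
  define C where "C = (p - 1) * (R + 1) powr (p - 2) + 1"
  have C1: "C \<ge> 1" unfolding C_def using p by simp
  have Cb: "dphi p u \<le> C" if "\<bar>u\<bar> \<le> R + 1" for u using dphi_bound[OF p that] unfolding C_def .
  define S where "S = cball (0::real) (R + 1)"
  have "uniformly_continuous_on S (dphi p)" unfolding S_def
    by (rule compact_uniformly_continuous) (use continuous_on_subset[OF dphi_cont[OF p]] in auto)
  then obtain \<delta>1 where d1: "\<delta>1 > 0" and uc: "\<forall>x\<in>S. \<forall>x'\<in>S. dist x' x < \<delta>1 \<longrightarrow> dist (dphi p x') (dphi p x) < \<epsilon> / (2 * (M + 1))"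
  proof -
    have "\<epsilon> / (2 * (M + 1)) > 0" using e M0 by simp
    then show ?thesis using that \<open>uniformly_continuous_on S (dphi p)\<close> unfolding uniformly_continuous_on_def by blast
  qed
  define \<epsilon>1 where "\<epsilon>1 = min 1 (\<epsilon> / (2 * C))"
  have e1: "\<epsilon>1 > 0" using e C1 unfolding \<epsilon>1_def by simp
  define \<delta>2 where "\<delta>2 = min (1 / (M + 1)) (\<delta>1 / (M + 1))"
  have d2: "\<delta>2 > 0" using d1 M0 unfolding \<delta>2_def by simp
  have ev1: "eventually (\<lambda>s. \<forall>y\<in>Y. \<bar>(Z s y - Z t y) / (s - t) - D y\<bar> \<le> \<epsilon>1) F" using q e1 by blast
  have ev2: "eventually (\<lambda>s. s \<noteq> t \<and> \<bar>s - t\<bar> < \<delta>2) F" using F d2 by blast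
  show "eventually (\<lambda>s. \<forall>y\<in>Y.
     \<bar>(phi p (Z s y) - phi p (Z t y)) / (s - t) - dphi p (Z t y) * D y\<bar> \<le> \<epsilon>) F"
    using ev1 ev2
  proof eventually_elim
    case (elim s)
    show ?case
    proof
      fix y assume y: "y \<in> Y"
      define a where "a = Z s y"
      define b where "b = Z t y"
      define qq where "qq = (a - b) / (s - t)"
      have st: "s - t \<noteq> 0" using elim by simp
      have qd: "\<bar>qq - D y\<bar> \<le> \<epsilon>1" using elim y unfolding qq_def a_def b_def by blast
      have Dy: "\<bar>D y\<bar> \<le> M" using M y by blast
      have bR: "\<bar>b\<bar> \<le> R" using R y unfolding b_def by blast
      have qb: "\<bar>qq\<bar> \<le> M + 1" using qd Dy unfolding \<epsilon>1_def by linarith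
      have ab: "a - b = (s - t) * qq" using st unfolding qq_def by simp
      have "\<bar>a - b\<bar> = \<bar>s - t\<bar> * \<bar>qq\<bar>" using ab by (simp add: abs_mult)
      also have "\<dots> \<le> \<delta>2 * (M + 1)" using elim qb by (intro mult_mono) auto
      finally have abd: "\<bar>a - b\<bar> \<le> \<delta>2 * (M + 1)" .
      have abl: "\<bar>a - b\<bar> < min 1 \<delta>1"
      proof -
        have "\<bar>a - b\<bar> = \<bar>s - t\<bar> * \<bar>qq\<bar>" using ab by (simp add: abs_mult)
        also have "\<dots> < \<delta>2 * (M + 1)"
        proof (cases "qq = 0")
          case True then show ?thesis using d2 M0 by simp
        next
          case False then show ?thesis using elim qb M0 by (intro mult_less_le_imp_less) auto
        qed
        also have "\<delta>2 * (M + 1) \<le> min 1 \<delta>1"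
        proof -
          have "\<delta>2 \<le> 1 / (M + 1)" "\<delta>2 \<le> \<delta>1 / (M + 1)" unfolding \<delta>2_def by auto
          then have "\<delta>2 * (M + 1) \<le> 1" "\<delta>2 * (M + 1) \<le> \<delta>1" using M0 by (simp_all add: le_divide_eq)
          then show ?thesis by simp
        qed
        finally show ?thesis .
      qed
      obtain \<xi> where xi: "\<bar>\<xi> - b\<bar> \<le> \<bar>a - b\<bar>" "phi p a - phi p b = (a - b) * dphi p \<xi>"
        using mvt_phi[OF p] by blast
      have xiS: "\<xi> \<in> S" and bS: "b \<in> S" using xi(1) abl bR unfolding S_def by (auto simp: dist_real_def)
      have dxi: "dist \<xi> b < \<delta>1" using xi(1) abl by (simp add: dist_real_def)
      have uc1: "\<bar>dphi p \<xi> - dphi p b\<bar> < \<epsilon> / (2 * (M + 1))"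
        using uc xiS bS dxi by (auto simp: dist_real_def)
      have Cxi: "\<bar>dphi p \<xi>\<bar> \<le> C" using Cb[of \<xi>] xiS dphi_nonneg[OF p] unfolding S_def by auto
      have eq: "(phi p a - phi p b) / (s - t) - dphi p b * D y
          = dphi p \<xi> * (qq - D y) + (dphi p \<xi> - dphi p b) * D y"
      proof -
        have "(phi p a - phi p b) / (s - t) = dphi p \<xi> * qq" using xi(2) unfolding qq_def by simp
        then show ?thesis by (simp add: algebra_simps)
      qed
      have "\<bar>dphi p \<xi> * (qq - D y)\<bar> \<le> C * \<epsilon>1"
        unfolding abs_mult using Cxi qd C1 by (intro mult_mono) auto
      also have "\<dots> \<le> \<epsilon> / 2"
      proof -
        have "\<epsilon>1 \<le> \<epsilon> / (2 * C)" unfolding \<epsilon>1_def by simp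
        then have "\<epsilon>1 * (2 * C) \<le> \<epsilon>" using C1 by (simp add: le_divide_eq)
        then show ?thesis by (simp add: algebra_simps)
      qed
      finally have t1: "\<bar>dphi p \<xi> * (qq - D y)\<bar> \<le> \<epsilon> / 2" .
      have "\<bar>(dphi p \<xi> - dphi p b) * D y\<bar> \<le> \<epsilon> / (2 * (M + 1)) * M"
        unfolding abs_mult using uc1 Dy by (intro mult_mono) auto
      also have "\<dots> \<le> \<epsilon> / 2"
      proof -
        have "\<epsilon> / (2 * (M + 1)) * M = (\<epsilon> / 2) * (M / (M + 1))" by simp
        moreover have "M / (M + 1) \<le> 1" using M0 by simp
        moreover have "(\<epsilon> / 2) * (M / (M + 1)) \<le> (\<epsilon> / 2) * 1"
          using \<open>M / (M + 1) \<le> 1\<close> e by (intro mult_left_mono) auto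
        ultimately show ?thesis by simp
      qed
      finally have t2: "\<bar>(dphi p \<xi> - dphi p b) * D y\<bar> \<le> \<epsilon> / 2" .
      show "\<bar>(phi p (Z s y) - phi p (Z t y)) / (s - t) - dphi p (Z t y) * D y\<bar> \<le> \<epsilon>"
        using eq t1 t2 unfolding a_def[symmetric] b_def[symmetric] by linarith
    qed
  qed
qed

lemma young_AW:
  fixes A W \<sigma> p :: real
  assumes p: "p > 2" and A: "A \<ge> 0" and W: "W \<ge> 0" and s: "\<sigma> > 0"
  shows "A powr ((p-2)/(p-1)) * W powr (1/(p-1)) \<le>
         (p-2)/(p-1) * (\<sigma> * A) + 1/(p-1) * (\<sigma> powr (-(p-2)) * W)"
proof (cases "A = 0 \<or> W = 0")
  case True
  have "0 \<le> (p-2)/(p-1) * (\<sigma> * A) + 1/(p-1) * (\<sigma> powr (-(p-2)) * W)"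
    using p A W s by (intro add_nonneg_nonneg mult_nonneg_nonneg) auto
  then show ?thesis using True by auto
next
  case False
  then have Ap: "A > 0" and Wp: "W > 0" using A W by auto
  have "(\<sigma> * A) powr ((p-2)/(p-1)) * (\<sigma> powr (-(p-2)) * W) powr (1/(p-1)) \<le>
         (p-2)/(p-1) * (\<sigma> * A) + 1/(p-1) * (\<sigma> powr (-(p-2)) * W)"
    using p Ap Wp s by (intro Youngs_inequality_0) (auto simp: field_simps)
  moreover have "(\<sigma> * A) powr ((p-2)/(p-1)) * (\<sigma> powr (-(p-2)) * W) powr (1/(p-1))
     = (\<sigma> powr ((p-2)/(p-1)) * \<sigma> powr (-(p-2) * (1/(p-1)))) * (A powr ((p-2)/(p-1)) * W powr (1/(p-1)))"
    by (simp add: powr_mult powr_powr)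
  moreover have "\<sigma> powr ((p-2)/(p-1)) * \<sigma> powr (-(p-2) * (1/(p-1))) = 1"
  proof -
    have "\<sigma> powr ((p-2)/(p-1)) * \<sigma> powr (-(p-2) * (1/(p-1))) = \<sigma> powr ((p-2)/(p-1) + (-(p-2) * (1/(p-1))))"
      by (simp add: powr_add)
    also have "(p-2)/(p-1) + (-(p-2) * (1/(p-1))) = 0" by (simp add: diff_divide_distrib add_divide_distrib)
    finally show ?thesis using s by simp
  qed
  ultimately show ?thesis by simp
qed

lemma final_ineq:
  fixes A W E \<sigma> p :: real
  assumes p: "p > 2" and A: "A \<ge> 0" and W: "W \<ge> 0" and s: "\<sigma> > 0" and AE: "A \<le> p * E"
  shows "((p-1) * (A powr (1/p)) powr (p-2) * W powr (1/p)) powr (p/(p-1)) \<le>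
         p * (p-1) powr (p/(p-1)) * ((p-2) * \<sigma> * E + \<sigma> powr (-(p-2)) * W)"
proof -
  have E0: "E \<ge> 0" using AE A p by (smt (verit) mult_nonneg_nonneg zero_le_mult_iff)
  have "((p-1) * (A powr (1/p)) powr (p-2) * W powr (1/p)) powr (p/(p-1))
      = (p-1) powr (p/(p-1)) * (A powr (1/p * (p-2) * (p/(p-1))) * W powr (1/p * (p/(p-1))))"
    by (simp add: powr_mult powr_powr)
  also have "1/p * (p-2) * (p/(p-1)) = (p-2)/(p-1)" using p by (simp add: field_simps)
  also have "1/p * (p/(p-1)) = 1/(p-1)" using p by (simp add: field_simps)
  also have "(p-1) powr (p/(p-1)) * (A powr ((p-2)/(p-1)) * W powr (1/(p-1))) \<le>
     (p-1) powr (p/(p-1)) * ((p-2)/(p-1) * (\<sigma> * A) + 1/(p-1) * (\<sigma> powr (-(p-2)) * W))"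
    by (intro mult_left_mono young_AW) (use assms in auto)
  also have "(p-2)/(p-1) * (\<sigma> * A) + 1/(p-1) * (\<sigma> powr (-(p-2)) * W) \<le>
      p * ((p-2) * \<sigma> * E + \<sigma> powr (-(p-2)) * W)"
  proof -
    have "(p-2)/(p-1) * (\<sigma> * A) \<le> (p-2)/(p-1) * (\<sigma> * (p * E))"
      using p s AE by (intro mult_left_mono) auto
    also have "\<dots> = p * ((p-2)/(p-1) * \<sigma> * E)" by simp
    also have "(p-2)/(p-1) * \<sigma> * E \<le> (p-2) * \<sigma> * E"
    proof -
      have "(p-2)/(p-1) \<le> (p-2)" using p by (simp add: divide_le_eq)
      then show ?thesis using s E0 by (intro mult_right_mono) auto
    qed
    finally have 1: "(p-2)/(p-1) * (\<sigma> * A) \<le> p * ((p-2) * \<sigma> * E)" using p by simp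
    have "1/(p-1) * (\<sigma> powr (-(p-2)) * W) \<le> 1 * (\<sigma> powr (-(p-2)) * W)"
      using p W by (intro mult_right_mono) auto
    also have "\<dots> \<le> p * (\<sigma> powr (-(p-2)) * W)"
    proof -
      have "0 \<le> \<sigma> powr (-(p-2)) * W" using W by simp
      then show ?thesis using p by (simp add: mult_le_cancel_right1)
    qed
    finally have 2: "1/(p-1) * (\<sigma> powr (-(p-2)) * W) \<le> p * (\<sigma> powr (-(p-2)) * W)" .
    show ?thesis using 1 2 by (simp add: algebra_simps)
  qed
  then have "(p-1) powr (p/(p-1)) * ((p-2)/(p-1) * (\<sigma> * A) + 1/(p-1) * (\<sigma> powr (-(p-2)) * W)) \<le>
     (p-1) powr (p/(p-1)) * (p * ((p-2) * \<sigma> * E + \<sigma> powr (-(p-2)) * W))"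
    by (intro mult_left_mono) auto
  finally show ?thesis by (simp add: algebra_simps)
qed

lemma int_le_const:
  fixes f :: "real \<Rightarrow> real"
  assumes "continuous_on {0..1} f" "\<forall>x\<in>{0..1}. \<bar>f x\<bar> \<le> V" "q > 0"
  shows "integral {0..1} (\<lambda>x. \<bar>f x\<bar> powr q) \<le> V powr q"
proof -
  have i: "(\<lambda>x. \<bar>f x\<bar> powr q) integrable_on {0..1}"
    using assms by (intro integrable_continuous_interval continuous_on_powr' continuous_intros) auto
  have "integral {0..1} (\<lambda>x. \<bar>f x\<bar> powr q) \<le> integral {0..1} (\<lambda>x::real. V powr q)"
    by (rule integral_le[OF i]) (use assms in \<open>auto intro: powr_mono2\<close>)
  then show ?thesis by simp
qed

lemma smooth_cont: "smooth_on_01 f \<Longrightarrow> continuous_on {0..1} f"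
  unfolding smooth_on_01_def by (metis DERIV_continuous_on)




theorem mainTheorem11:
  fixes p :: real and \<beta> :: "real \<Rightarrow> real"
  assumes "p \<ge> 2"
    and "smooth_on_01 \<beta>"
    and "\<forall>x\<in>{0..1}. 0 \<le> \<beta> x \<and> \<beta> x \<le> 1"
  shows "\<exists>K>0. \<forall>a a0 c z0 z1 z zx zxx zt ztx ztt v.
     H1' a a0 c \<and> (\<forall>x\<in>{0..1}. x < c \<longrightarrow> \<beta> x = 0) \<and>
     in_Yp p z0 z1 \<and> strong_solution p a z0 z1 z zx zxx zt ztx ztt \<and>
     (\<forall>t\<ge>0. solves_dirichlet (\<lambda>x. \<beta> x * sgn (z t x) * \<bar>z t x\<bar> powr (p - 1)) (v t))
     \<longrightarrow>
     (\<forall>t\<ge>0.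
        integral {0..1} (\<lambda>x. \<bar>v t x\<bar> powr (p / (p - 1))) \<le> K * E_p p zx zt t \<and>
        (\<exists>vt. (\<forall>x\<in>{0..1}. ((\<lambda>s. v s x) has_real_derivative vt x) (at t within {0..})) \<and>
          (\<forall>\<sigma>>0. integral {0..1} (\<lambda>x. \<bar>vt x\<bar> powr (p / (p - 1))) \<le>
             K * ((p - 2) * \<sigma> * E_p p zx zt t +
                  \<sigma> powr (- (p - 2)) * integral {0..1} (\<lambda>x. \<beta> x * \<bar>zt t x\<bar> powr p)))))"
proof -
  have p2: "p \<ge> 2" and p1: "p \<ge> 1" using assms(1) by auto
  have bc: "continuous_on {0..1} \<beta>" using smooth_cont[OF assms(2)] .
  have b01: "\<forall>x\<in>{0..1}. 0 \<le> \<beta> x \<and> \<beta> x \<le> 1" using assms(3) .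
  define K where "K = p * (p-1) powr (p/(p-1))"
  have pq: "(p-1) powr (p/(p-1)) \<ge> 1" using p2 by (intro ge_one_powr_ge_zero) auto
  have Kp: "K \<ge> p" unfolding K_def using pq p2 by (simp add: mult_le_cancel_left1)
  then have K1: "K \<ge> 1" and K0: "K > 0" using p2 by auto
  show ?thesis
  proof (rule exI[of _ K], rule conjI[OF K0], intro allI impI)
    fix a a0 c z0 z1 z zx zxx zt ztx ztt v t
    assume H: "H1' a a0 c \<and> (\<forall>x\<in>{0..1}. x < c \<longrightarrow> \<beta> x = 0) \<and>
     in_Yp p z0 z1 \<and> strong_solution p a z0 z1 z zx zxx zt ztx ztt \<and>
     (\<forall>t\<ge>0. solves_dirichlet (\<lambda>x. \<beta> x * sgn (z t x) * \<bar>z t x\<bar> powr (p - 1)) (v t))"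
      and t: "(t::real) \<ge> 0"
    show "integral {0..1} (\<lambda>x. \<bar>v t x\<bar> powr (p / (p - 1))) \<le> K * E_p p zx zt t \<and>
        (\<exists>vt. (\<forall>x\<in>{0..1}. ((\<lambda>s. v s x) has_real_derivative vt x) (at t within {0..})) \<and>
          (\<forall>\<sigma>>0. integral {0..1} (\<lambda>x. \<bar>vt x\<bar> powr (p / (p - 1))) \<le>
             K * ((p - 2) * \<sigma> * E_p p zx zt t +
                  \<sigma> powr (- (p - 2)) * integral {0..1} (\<lambda>x. \<beta> x * \<bar>zt t x\<bar> powr p))))"
    proof -
      have SS: "strong_solution p a z0 z1 z zx zxx zt ztx ztt" using H by blast
      have vdir: "\<forall>s\<ge>0. solves_dirichlet (\<lambda>x. \<beta> x * sgn (z s x) * \<bar>z s x\<bar> powr (p - 1)) (v s)" using H by blast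
      have Wall: "\<forall>s\<ge>0. in_W2p_W10p p (z s) (zx s) (zxx s)" using SS unfolding strong_solution_def by blast
      have Wt: "in_W2p_W10p p (z t) (zx t) (zxx t)" using Wall t by blast
      have Wzt: "in_W10p p (zt t) (ztx t)" using SS t unfolding strong_solution_def by blast
      have lim: "((\<lambda>s. Lp_pow p (\<lambda>x. (zx s x - zx t x) / (s - t) - ztx t x)) \<longlongrightarrow> 0) (at t within {0..})"
        using SS t unfolding strong_solution_def by blast
      have Lzx: "in_Lp p (zx t)" using Wt unfolding in_W2p_W10p_def has_weak_deriv_Lp_def by blast
      have Lzt: "in_Lp p (zt t)" using Wzt unfolding in_W10p_def has_weak_deriv_Lp_def by blast
      have zc: "continuous_on {0..1} (z s)" if "s \<ge> 0" for s
        using Wall that weak_cont p1 unfolding in_W2p_W10p_def by blast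
      have ztc: "continuous_on {0..1} (zt t)" using Wzt weak_cont p1 unfolding in_W10p_def by blast
      define A where "A = Lp_pow p (zx t)"
      define S where "S = A powr (1/p)"
      define E where "E = E_p p zx zt t"
      have A0: "A \<ge> 0" unfolding A_def by (rule Lp_pow_nonneg)
      have S0: "S \<ge> 0" unfolding S_def by simp
      have zb: "\<bar>z t y\<bar> \<le> S" if "y \<in> {0..1}" for y
      proof -
        have "z t y = integral {0..y} (zx t)" using Wt that weak_repr unfolding in_W2p_W10p_def by blast
        then show ?thesis using prim_bound_Lp[OF Lzx p1 that] unfolding S_def A_def by simp
      qed
      have AE: "A \<le> p * E"
      proof -
        have "A \<le> integral {0..1} (\<lambda>x. \<bar>zx t x + zt t x\<bar> powr p + \<bar>zx t x - zt t x\<bar> powr p)"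
          unfolding A_def by (rule A_le_pE[OF Lzx Lzt p1])
        also have "\<dots> = p * E" unfolding E_def E_p_def using p2 by simp
        finally show ?thesis .
      qed
      have E0: "E \<ge> 0" using AE A0 p2 by (smt (verit) mult_nonneg_nonneg zero_le_mult_iff)
      define g where "g s y = \<beta> y * phi p (z s y)" for s y
      have geq: "(\<lambda>x. \<beta> x * sgn (z s x) * \<bar>z s x\<bar> powr (p - 1)) = g s" for s
        unfolding g_def phi_def by (simp add: mult.assoc)
      have vd: "solves_dirichlet (g s) (v s)" if "s \<ge> 0" for s using vdir that geq by metis
      have phic: "continuous_on UNIV (phi p)"
        using phi_deriv[OF p2] by (intro continuous_at_imp_continuous_on ballI DERIV_isCont) blast
      have gc: "continuous_on {0..1} (g s)" if "s \<ge> 0" for s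
        unfolding g_def using bc continuous_on_compose2[OF phic zc[OF that]] by (intro continuous_intros) auto
      obtain V' where V': "\<And>s x. s \<ge> 0 \<Longrightarrow> x \<in> {0<..<1} \<Longrightarrow>
          (v s has_real_derivative V' s x) (at x) \<and> (V' s has_real_derivative g s x) (at x)"
      proof -
        have "\<forall>s. \<exists>w'. s \<ge> 0 \<longrightarrow> (\<forall>x\<in>{0<..<1}. (v s has_real_derivative w' x) (at x) \<and> (w' has_real_derivative g s x) (at x))"
          using vd unfolding solves_dirichlet_def by blast
        then obtain V' where "\<forall>s. s \<ge> 0 \<longrightarrow> (\<forall>x\<in>{0<..<1}. (v s has_real_derivative V' s x) (at x) \<and> (V' s has_real_derivative g s x) (at x))"
          by metis
        then show ?thesis using that by blast
      qed
      have vc: "continuous_on {0..1} (v s)" "v s 0 = 0" "v s 1 = 0" if "s \<ge> 0" for s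
        using vd[OF that] unfolding solves_dirichlet_def by auto
      have part1: "integral {0..1} (\<lambda>x. \<bar>v t x\<bar> powr (p / (p - 1))) \<le> K * E"
      proof -
        have gb: "integral {0..1} (\<lambda>y. \<bar>g t y\<bar>) \<le> S powr (p - 1)"
        proof -
          have ig: "(\<lambda>y. \<bar>g t y\<bar>) integrable_on {0..1}"
            using gc[OF t] by (intro integrable_continuous_interval continuous_intros)
          have "integral {0..1} (\<lambda>y. \<bar>g t y\<bar>) \<le> integral {0..1} (\<lambda>y::real. S powr (p - 1))"
          proof (rule integral_le[OF ig])
            fix y :: real assume y: "y \<in> {0..1}"
            have "\<bar>g t y\<bar> = \<beta> y * \<bar>z t y\<bar> powr (p - 1)" using b01 y unfolding g_def by (simp add: abs_mult abs_phi)
            also have "\<dots> \<le> 1 * \<bar>z t y\<bar> powr (p - 1)" using b01 y by (intro mult_right_mono) auto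
            also have "\<dots> \<le> S powr (p - 1)" using zb[OF y] p2 by (simp add: powr_mono2)
            finally show "\<bar>g t y\<bar> \<le> S powr (p - 1)" .
          qed auto
          then show ?thesis by simp
        qed
        have vb: "\<forall>x\<in>{0..1}. \<bar>v t x\<bar> \<le> S powr (p - 1)"
        proof
          fix x :: real assume x: "x \<in> {0..1}"
          have "\<bar>v t x\<bar> \<le> integral {0..1} (\<lambda>y. \<bar>g t y\<bar>)"
            by (rule dir_bound[where w'="V' t", OF vc(1)[OF t] vc(2)[OF t] vc(3)[OF t] _ gc[OF t] x]) (use V' t in blast)
          then show "\<bar>v t x\<bar> \<le> S powr (p - 1)" using gb by linarith
        qed
        have "integral {0..1} (\<lambda>x. \<bar>v t x\<bar> powr (p / (p - 1))) \<le> (S powr (p - 1)) powr (p / (p - 1))"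
          by (rule int_le_const[OF vc(1)[OF t] vb]) (use p2 in simp)
        also have "(S powr (p - 1)) powr (p / (p - 1)) = A"
          using p2 A0 unfolding S_def by (simp add: powr_powr)
        also have "A \<le> K * E" using AE Kp E0 by (meson mult_right_mono order_trans)
        finally show ?thesis .
      qed
      define h where "h y = \<beta> y * dphi p (z t y) * zt t y" for y
      have hc: "continuous_on {0..1} h"
        unfolding h_def using bc ztc continuous_on_compose2[OF dphi_cont[OF p2] zc[OF t]]
        by (intro continuous_intros) auto
      obtain vt where vtc: "continuous_on {0..1} vt" and vt0: "vt 0 = 0" and vt1: "vt 1 = 0"
        and vtd: "\<exists>w'. \<forall>x\<in>{0<..<1}. (vt has_real_derivative w' x) (at x) \<and> (w' has_real_derivative h x) (at x)"
        using dir_exists[OF hc] by blast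
      obtain vt' where vt': "\<forall>x\<in>{0<..<1}. (vt has_real_derivative vt' x) (at x) \<and> (vt' has_real_derivative h x) (at x)"
        using vtd by blast
      have deriv: "\<forall>x\<in>{0..1}. ((\<lambda>s. v s x) has_real_derivative vt x) (at t within {0..})"
      proof
        fix x :: real assume x: "x \<in> {0..1}"
        obtain Mz where Mz0: "Mz \<ge> 0" and Mz: "\<forall>y\<in>{0..1}. \<bar>zt t y\<bar> \<le> Mz" using cont_bounded[OF ztc] by blast
        have qu: "\<forall>\<epsilon>>0. eventually (\<lambda>s. \<forall>y\<in>{0..1}. \<bar>(z s y - z t y) / (s - t) - zt t y\<bar> \<le> \<epsilon>) (at t within {0..})"
          by (rule quot_unif[where z=z and zx=zx and zxx=zxx and zt=zt and ztx=ztx, OF p1 t Wall Wzt lim])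
        have un: "\<forall>\<epsilon>>0. eventually (\<lambda>s. \<forall>y\<in>{0..1}.
            \<bar>(phi p (z s y) - phi p (z t y)) / (s - t) - dphi p (z t y) * zt t y\<bar> \<le> \<epsilon>) (at t within {0..})"
          by (rule unif_phi[OF p2 _ Mz Mz0 S0 qu]) (use zb ev_near in auto)
        have "((\<lambda>s. (v s x - v t x) / (s - t)) \<longlongrightarrow> vt x) (at t within {0..})"
        proof (rule tendstoI)
          fix e :: real assume e: "e > 0"
          have "eventually (\<lambda>s. \<forall>y\<in>{0..1}.
            \<bar>(phi p (z s y) - phi p (z t y)) / (s - t) - dphi p (z t y) * zt t y\<bar> \<le> e / 2) (at t within {0..})"
          proof -
            have "e / 2 > 0" using e by simp
            then show ?thesis using un by blast
          qed
          then show "eventually (\<lambda>s. dist ((v s x - v t x) / (s - t)) (vt x) < e) (at t within {0..})"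
            using ev_nonneg ev_near[OF zero_less_one, of t "{0..}"]
          proof eventually_elim
            case (elim s)
            then have s: "s \<ge> 0" and st: "s \<noteq> t" by auto
            define ge where "ge y = (g s y - g t y) / (s - t) - h y" for y
            have gee: "ge y = \<beta> y * ((phi p (z s y) - phi p (z t y)) / (s - t) - dphi p (z t y) * zt t y)" for y
              unfolding ge_def g_def h_def by (simp add: algebra_simps diff_divide_distrib)
            have gec: "continuous_on {0..1} ge" unfolding ge_def
              using gc[OF s] gc[OF t] hc st by (intro continuous_intros) auto
            have "\<bar>(v s x - v t x) / (s - t) - vt x\<bar> \<le> integral {0..1} (\<lambda>y. \<bar>ge y\<bar>)"
            proof (rule dir_bound[where w'="\<lambda>y. (V' s y - V' t y) / (s - t) - vt' y", OF _ _ _ _ gec x])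
              show "continuous_on {0..1} (\<lambda>y. (v s y - v t y) / (s - t) - vt y)"
                using vc(1)[OF s] vc(1)[OF t] vtc st by (intro continuous_intros) auto
              show "(v s 0 - v t 0) / (s - t) - vt 0 = 0" using vc(2)[OF s] vc(2)[OF t] vt0 by simp
              show "(v s 1 - v t 1) / (s - t) - vt 1 = 0" using vc(3)[OF s] vc(3)[OF t] vt1 by simp
              show "\<forall>y\<in>{0<..<1}. ((\<lambda>y. (v s y - v t y) / (s - t) - vt y) has_real_derivative
                  (V' s y - V' t y) / (s - t) - vt' y) (at y) \<and>
                 ((\<lambda>y. (V' s y - V' t y) / (s - t) - vt' y) has_real_derivative ge y) (at y)"
              proof
                fix y :: real assume y: "y \<in> {0<..<1}"
                have d1: "(v s has_real_derivative V' s y) (at y)" "(V' s has_real_derivative g s y) (at y)"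
                  using V'[OF s y] by auto
                have d2: "(v t has_real_derivative V' t y) (at y)" "(V' t has_real_derivative g t y) (at y)"
                  using V'[OF t y] by auto
                have d3: "(vt has_real_derivative vt' y) (at y)" "(vt' has_real_derivative h y) (at y)"
                  using vt' y by auto
                show "((\<lambda>y. (v s y - v t y) / (s - t) - vt y) has_real_derivative
                  (V' s y - V' t y) / (s - t) - vt' y) (at y) \<and>
                 ((\<lambda>y. (V' s y - V' t y) / (s - t) - vt' y) has_real_derivative ge y) (at y)"
                  unfolding ge_def using d1 d2 d3 st by (auto intro!: derivative_eq_intros)
              qed
            qed
            also have "\<dots> \<le> integral {0..1} (\<lambda>y::real. e / 2)"
            proof (rule integral_le)
              show "(\<lambda>y. \<bar>ge y\<bar>) integrable_on {0..1}"
                using gec by (intro integrable_continuous_interval continuous_intros)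
              fix y :: real assume y: "y \<in> {0..1}"
              have "\<bar>ge y\<bar> = \<beta> y * \<bar>(phi p (z s y) - phi p (z t y)) / (s - t) - dphi p (z t y) * zt t y\<bar>"
                unfolding gee using b01 y by (simp add: abs_mult)
              also have "\<dots> \<le> 1 * (e / 2)" using b01 y elim by (intro mult_mono) auto
              finally show "\<bar>ge y\<bar> \<le> e / 2" by simp
            qed auto
            also have "\<dots> = e / 2" by simp
            finally show "dist ((v s x - v t x) / (s - t)) (vt x) < e" using e by (simp add: dist_real_def)
          qed
        qed
        then show "((\<lambda>s. v s x) has_real_derivative vt x) (at t within {0..})"
          by (simp add: has_field_derivative_iff)
      qed
      have bound: "\<forall>\<sigma>>0. integral {0..1} (\<lambda>x. \<bar>vt x\<bar> powr (p / (p - 1))) \<le>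
             K * ((p - 2) * \<sigma> * E + \<sigma> powr (- (p - 2)) * integral {0..1} (\<lambda>x. \<beta> x * \<bar>zt t x\<bar> powr p))"
      proof (intro allI impI)
        fix \<sigma> :: real assume \<sigma>: "\<sigma> > 0"
        define W where "W = integral {0..1} (\<lambda>x. \<beta> x * \<bar>zt t x\<bar> powr p)"
        define B where "B = integral {0..1} (\<lambda>x. \<beta> x * \<bar>zt t x\<bar>)"
        have BW: "B \<le> W powr (1/p)" unfolding B_def W_def by (rule beta_L1[OF Lzt p1 bc b01])
        have W0: "W \<ge> 0" unfolding W_def
          by (cases "(\<lambda>x. \<beta> x * \<bar>zt t x\<bar> powr p) integrable_on {0..1}")
             (auto intro!: integral_nonneg simp: not_integrable_integral b01)
        have iB: "(\<lambda>x. \<beta> x * \<bar>zt t x\<bar>) integrable_on {0..1}"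
          using bc ztc by (intro integrable_continuous_interval continuous_intros)
        have ih: "(\<lambda>y. \<bar>h y\<bar>) integrable_on {0..1}"
          using hc by (intro integrable_continuous_interval continuous_intros)
        define Sp where "Sp = (if p = 2 then 1 else S powr (p - 2))"
        have Sp0: "Sp \<ge> 0" unfolding Sp_def by simp
        have hb: "\<bar>h y\<bar> \<le> (p - 1) * Sp * (\<beta> y * \<bar>zt t y\<bar>)" if y: "y \<in> {0..1}" for y
        proof -
          have "dphi p (z t y) \<le> (p - 1) * Sp"
          proof (cases "p = 2")
            case True then show ?thesis by (simp add: dphi_def Sp_def)
          next
            case False
            have "\<bar>z t y\<bar> powr (p - 2) \<le> S powr (p - 2)" using zb[OF y] p2 by (intro powr_mono2) auto
            then show ?thesis using False p2 by (simp add: dphi_def Sp_def)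
          qed
          then have "dphi p (z t y) * (\<beta> y * \<bar>zt t y\<bar>) \<le> (p - 1) * Sp * (\<beta> y * \<bar>zt t y\<bar>)"
            using b01 y by (intro mult_right_mono) auto
          moreover have "\<bar>h y\<bar> = dphi p (z t y) * (\<beta> y * \<bar>zt t y\<bar>)"
            unfolding h_def using b01 y dphi_nonneg[OF p2] by (simp add: abs_mult)
          ultimately show ?thesis by simp
        qed
        have hint: "integral {0..1} (\<lambda>y. \<bar>h y\<bar>) \<le> (p - 1) * Sp * B"
        proof -
          have "integral {0..1} (\<lambda>y. \<bar>h y\<bar>) \<le> integral {0..1} (\<lambda>y. (p - 1) * Sp * (\<beta> y * \<bar>zt t y\<bar>))"
          proof (rule integral_le[OF ih])
            show "(\<lambda>y. (p - 1) * Sp * (\<beta> y * \<bar>zt t y\<bar>)) integrable_on {0..1}"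
              using integrable_cmul[OF iB, of "(p - 1) * Sp"] by simp
          qed (use hb in auto)
          also have "\<dots> = (p - 1) * Sp * B" unfolding B_def by simp
          finally show ?thesis .
        qed
        define V where "V = (p - 1) * Sp * W powr (1/p)"
        have vtb: "\<forall>x\<in>{0..1}. \<bar>vt x\<bar> \<le> V"
        proof
          fix x :: real assume x: "x \<in> {0..1}"
          have "\<bar>vt x\<bar> \<le> integral {0..1} (\<lambda>y. \<bar>h y\<bar>)"
            by (rule dir_bound[OF vtc vt0 vt1 vt' hc x])
          also have "\<dots> \<le> (p - 1) * Sp * B" by (rule hint)
          also have "\<dots> \<le> (p - 1) * Sp * W powr (1/p)" using BW Sp0 p2 by (intro mult_left_mono) auto
          finally show "\<bar>vt x\<bar> \<le> V" unfolding V_def .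
        qed
        have "integral {0..1} (\<lambda>x. \<bar>vt x\<bar> powr (p / (p - 1))) \<le> V powr (p / (p - 1))"
          by (rule int_le_const[OF vtc vtb]) (use p2 in simp)
        also have "V powr (p / (p - 1)) \<le> K * ((p - 2) * \<sigma> * E + \<sigma> powr (- (p - 2)) * W)"
        proof (cases "p = 2")
          case True
          have "V powr (p / (p - 1)) = W" using True W0 unfolding V_def Sp_def by (simp add: powr_powr)
          then show ?thesis using True \<sigma> K1 W0 by (simp add: mult_le_cancel_right1)
        next
          case False
          then have p2': "p > 2" using p2 by simp
          have "V = (p - 1) * (A powr (1/p)) powr (p - 2) * W powr (1/p)"
            unfolding V_def Sp_def S_def using False by simp
          then show ?thesis unfolding K_def using final_ineq[OF p2' A0 W0 \<sigma> AE] by simp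
        qed
        finally show "integral {0..1} (\<lambda>x. \<bar>vt x\<bar> powr (p / (p - 1))) \<le>
             K * ((p - 2) * \<sigma> * E + \<sigma> powr (- (p - 2)) * integral {0..1} (\<lambda>x. \<beta> x * \<bar>zt t x\<bar> powr p))"
          unfolding W_def .
      qed
      show ?thesis using part1 deriv bound unfolding E_def by blast
    qed
  qed
qed


end
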